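(* Let $q\ge0$, $\delta'\ge0$, and let $X$ be a $(1,q)$-quasi-geodesic metric space in which every triangle whose sides are $(1,q)$-quasi-geodesics is $\delta'$-thin. Then $X$ satisfies the four-point condition with constant $\delta=56\delta'+6q$, i.e. for all $x,y,z,w\in X$, $$d(x,z)+d(y,w)\le\max\{d(x,w)+d(y,z),\ d(x,y)+d(z,w)\}+56\delta'+6q.$$
   Context: A $(1,q)$-quasi-geodesic is a map $\gamma:[a,b]\to X$ with $|s-t|-q\le d(\gamma(s),\gamma(t))\le|s-t|+q$ for all $s,t$; $X$ is a $(1,q)$-quasi-geodesic metric space if any two points are joined by one. For $A\subset X$, $\mathcal{N}_r(A)=\{p: d(p,A)\le r\}$. A triangle with sides $\lambda_1,\lambda_2,\lambda_3$ is $\delta'$-thin if $\lambda_i\subset\mathcal{N}_{\delta'}(\lambda_j\cup\lambda_k)$ for all permutations $(i,j,k)$ of $(1,2,3)$. *)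

theory Defs
  imports "HOL-Analysis.Analysis"
begin

definition quasi_geodesic :: "real \<Rightarrow> (real \<Rightarrow> 'a::metric_space) \<Rightarrow> real \<Rightarrow> real \<Rightarrow> bool" where
  "quasi_geodesic q \<gamma> a b \<longleftrightarrow> a \<le> b \<and>
     (\<forall>s\<in>{a..b}. \<forall>t\<in>{a..b}.
        \<bar>s - t\<bar> - q \<le> dist (\<gamma> s) (\<gamma> t) \<and> dist (\<gamma> s) (\<gamma> t) \<le> \<bar>s - t\<bar> + q)"

definition qg_joins :: "real \<Rightarrow> (real \<Rightarrow> 'a::metric_space) \<Rightarrow> real \<Rightarrow> real \<Rightarrow> 'a \<Rightarrow> 'a \<Rightarrow> bool" where
  "qg_joins q \<gamma> a b x y \<longleftrightarrow> quasi_geodesic q \<gamma> a b \<and> \<gamma> a = x \<and> \<gamma> b = y"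

definition quasi_geodesic_space :: "real \<Rightarrow> 'a::metric_space itself \<Rightarrow> bool" where
  "quasi_geodesic_space q _ \<longleftrightarrow> (\<forall>x y::'a. \<exists>\<gamma> a b. qg_joins q \<gamma> a b x y)"

definition nbhd :: "real \<Rightarrow> 'a::metric_space set \<Rightarrow> 'a set" where
  "nbhd r A = {p. infdist p A \<le> r}"

definition thin_triangle :: "real \<Rightarrow> 'a::metric_space set \<Rightarrow> 'a set \<Rightarrow> 'a set \<Rightarrow> bool" where
  "thin_triangle d L1 L2 L3 \<longleftrightarrow>
     L1 \<subseteq> nbhd d (L2 \<union> L3) \<and> L2 \<subseteq> nbhd d (L1 \<union> L3) \<and> L3 \<subseteq> nbhd d (L1 \<union> L2)"

end

theory Submission
  imports Defs
begin

lemma qg_up: "quasi_geodesic q \<gamma> a b \<Longrightarrow> s\<in>{a..b} \<Longrightarrow> t\<in>{a..b} \<Longrightarrow> dist (\<gamma> s) (\<gamma> t) \<le> \<bar>s-t\<bar> + q"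
  unfolding quasi_geodesic_def by blast

lemma qg_low: "quasi_geodesic q \<gamma> a b \<Longrightarrow> s\<in>{a..b} \<Longrightarrow> t\<in>{a..b} \<Longrightarrow> \<bar>s-t\<bar> - q \<le> dist (\<gamma> s) (\<gamma> t)"
  unfolding quasi_geodesic_def by blast

lemma oncurve:
  assumes "qg_joins q \<gamma> a b x y" "t\<in>{a..b}"
  shows "dist x (\<gamma> t) + dist (\<gamma> t) y \<le> dist x y + 3*q"
proof -
  have Q: "quasi_geodesic q \<gamma> a b" and ab: "a \<le> b" and ex: "\<gamma> a = x" "\<gamma> b = y"
    using assms unfolding qg_joins_def quasi_geodesic_def by auto
  have a: "a\<in>{a..b}" "b\<in>{a..b}" using ab by auto
  have "dist (\<gamma> a) (\<gamma> t) \<le> \<bar>a-t\<bar> + q" by (rule qg_up[OF Q a(1) assms(2)])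
  moreover have "dist (\<gamma> t) (\<gamma> b) \<le> \<bar>t-b\<bar> + q" by (rule qg_up[OF Q assms(2) a(2)])
  moreover have "\<bar>a-b\<bar> - q \<le> dist (\<gamma> a) (\<gamma> b)" by (rule qg_low[OF Q a])
  ultimately show ?thesis using assms(2) ex by (auto simp: abs_if split: if_splits)
qed

lemma gp_low:
  assumes "qg_joins q \<gamma> a b x y" "t\<in>{a..b}"
  shows "dist w x + dist w y - dist x y \<le> 2 * dist w (\<gamma> t) + 3*q"
proof -
  have "dist x (\<gamma> t) + dist (\<gamma> t) y \<le> dist x y + 3*q" by (rule oncurve[OF assms])
  moreover have "dist w x \<le> dist w (\<gamma> t) + dist (\<gamma> t) x" by (rule dist_triangle)
  moreover have "dist w y \<le> dist w (\<gamma> t) + dist (\<gamma> t) y" by (rule dist_triangle)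
  ultimately show ?thesis by (simp add: dist_commute)
qed

lemma infdist_pick:
  assumes "infdist p A \<le> r" "A \<noteq> {}" "e > 0"
  shows "\<exists>u\<in>A. dist p u \<le> r + e"
proof -
  have "(INF a\<in>A. dist p a) < r + e" using assms infdist_notempty[OF assms(2)] by auto
  then obtain u where "u\<in>A" "dist p u < r + e"
    using cINF_less_iff[of A "dist p" "r+e"] assms(2) by auto
  then show ?thesis by force
qed

lemma qg_joins_ne: "qg_joins q \<gamma> a b x y \<Longrightarrow> \<gamma> ` {a..b} \<noteq> {}"
  unfolding qg_joins_def quasi_geodesic_def by auto

lemma qg_joins_ends: "qg_joins q \<gamma> a b x y \<Longrightarrow> x \<in> \<gamma> ` {a..b} \<and> y \<in> \<gamma> ` {a..b}"
  unfolding qg_joins_def quasi_geodesic_def by (auto intro!: image_eqI)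

locale thin_qg =
  fixes q d :: real and ty :: "'a::metric_space itself"
  assumes q0: "q \<ge> 0" and d0: "d \<ge> 0"
    and qgs: "quasi_geodesic_space q TYPE('a)"
    and thin: "\<And>(x::'a) y z \<gamma>1 a1 b1 \<gamma>2 a2 b2 \<gamma>3 a3 b3.
           qg_joins q \<gamma>1 a1 b1 x y \<Longrightarrow> qg_joins q \<gamma>2 a2 b2 y z \<Longrightarrow> qg_joins q \<gamma>3 a3 b3 z x \<Longrightarrow>
           thin_triangle d (\<gamma>1 ` {a1..b1}) (\<gamma>2 ` {a2..b2}) (\<gamma>3 ` {a3..b3})"
begin

lemma join: "\<exists>\<gamma> a b. qg_joins q \<gamma> a b (x::'a) y"
  using qgs unfolding quasi_geodesic_space_def by blast

lemma up:
  fixes x y w :: 'a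
  assumes A: "qg_joins q \<alpha> a b x y" and e: "e > 0"
  shows "\<exists>t\<in>{a..b}. 2 * dist w (\<alpha> t) \<le> dist w x + dist w y - dist x y + 4*d + 8*q + 6*e"
proof -
  obtain \<rho> a2 b2 where R: "qg_joins q \<rho> a2 b2 y w" using join by blast
  obtain \<beta> a3 b3 where B: "qg_joins q \<beta> a3 b3 w x" using join by blast
  have T: "thin_triangle d (\<alpha> ` {a..b}) (\<rho> ` {a2..b2}) (\<beta> ` {a3..b3})"
    by (rule thin[OF A R B])
  have Rne: "\<rho> ` {a2..b2} \<noteq> {}" and Bne: "\<beta> ` {a3..b3} \<noteq> {}"
    using qg_joins_ne R B by blast+
  have QA: "quasi_geodesic q \<alpha> a b" and ab: "a \<le> b" and ex: "\<alpha> a = x" "\<alpha> b = y"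
    using A unfolding qg_joins_def quasi_geodesic_def by auto
  define S where "S = {t\<in>{a..b}. infdist (\<alpha> t) (\<beta> ` {a3..b3}) \<le> d}"
  have cover: "t \<in> S \<or> infdist (\<alpha> t) (\<rho> ` {a2..b2}) \<le> d" if "t\<in>{a..b}" for t
  proof -
    have "infdist (\<alpha> t) (\<rho> ` {a2..b2} \<union> \<beta> ` {a3..b3}) \<le> d"
    proof -
      have "\<alpha> t \<in> \<alpha> ` {a..b}" using that by blast
      then show ?thesis using T unfolding thin_triangle_def nbhd_def by blast
    qed
    then show ?thesis using infdist_Un_min[OF Rne Bne] that unfolding S_def by auto
  qed
  have aS: "a \<in> S" using qg_joins_ends[OF B] ex ab d0 unfolding S_def by auto
  have bdd: "bdd_above S" unfolding S_def by (auto intro: bdd_aboveI[of _ b])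
  define \<sigma> where "\<sigma> = Sup S"
  have sig: "a \<le> \<sigma>" "\<sigma> \<le> b" unfolding \<sigma>_def
    using aS bdd cSup_upper apply blast
    using aS by (intro cSup_least) (auto simp: S_def)
  obtain s where sS: "s \<in> S" "\<sigma> - e/2 < s"
    using less_cSupD[of S "\<sigma> - e/2"] aS e unfolding \<sigma>_def by auto
  have sle: "s \<le> \<sigma>" using sS bdd cSup_upper unfolding \<sigma>_def by blast
  define s' where "s' = min b (\<sigma> + e/2)"
  have s'in: "s' \<in> {a..b}" using sig e unfolding s'_def by auto
  have s'R: "infdist (\<alpha> s') (\<rho> ` {a2..b2}) \<le> d"
  proof (cases "s' = b")
    case True
    then show ?thesis using qg_joins_ends[OF R] ex d0 by auto
  next
    case False
    then have "s' > \<sigma>" using e unfolding s'_def by auto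
    then have "s' \<notin> S" using bdd cSup_upper unfolding \<sigma>_def by force
    then show ?thesis using cover[OF s'in] by auto
  qed
  have ss': "\<bar>s - s'\<bar> \<le> e" using sS sle sig e unfolding s'_def by auto
  have sin: "s \<in> {a..b}" and sB: "infdist (\<alpha> s) (\<beta> ` {a3..b3}) \<le> d" using sS unfolding S_def by auto
  obtain u where u: "u \<in> \<beta> ` {a3..b3}" "dist (\<alpha> s) u \<le> d + e"
    using infdist_pick[OF sB Bne e] by blast
  obtain v where v: "v \<in> \<rho> ` {a2..b2}" "dist (\<alpha> s') v \<le> d + e"
    using infdist_pick[OF s'R Rne e] by blast
  have pp: "dist (\<alpha> s) (\<alpha> s') \<le> e + q" using qg_up[OF QA sin s'in] ss' by linarith
  have ou: "dist w u + dist u x \<le> dist w x + 3*q" using u(1) oncurve[OF B] by blast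
  have ov: "dist y v + dist v w \<le> dist y w + 3*q" using v(1) oncurve[OF R] by blast
  have t1: "dist x y \<le> dist x (\<alpha> s) + dist (\<alpha> s) y" by (rule dist_triangle)
  have t2: "dist x (\<alpha> s) \<le> dist x u + dist u (\<alpha> s)" by (rule dist_triangle)
  have t3: "dist (\<alpha> s) y \<le> dist (\<alpha> s) (\<alpha> s') + dist (\<alpha> s') v + dist v y"
    by (metis add.commute add_le_cancel_left dist_triangle order_trans)
  have t4: "dist w (\<alpha> s) \<le> dist w u + dist u (\<alpha> s)" by (rule dist_triangle)
  have t5: "dist w (\<alpha> s) \<le> dist w v + dist v (\<alpha> s') + dist (\<alpha> s') (\<alpha> s)"
    by (metis add.commute add_le_cancel_left dist_triangle order_trans)
  have "2 * dist w (\<alpha> s) \<le> dist w x + dist w y - dist x y + 4*d + 8*q + 6*e"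
    using pp ou ov t1 t2 t3 t4 t5 u(2) v(2)
    by (simp add: dist_commute)
  then show ?thesis using sin by blast
qed

lemma four_eps:
  fixes x y z w :: 'a
  assumes e: "e > 0"
  shows "dist x z + dist y w \<le> max (dist x w + dist y z) (dist x y + dist z w) + 6*d + 11*q + 8*e"
proof -
  obtain \<alpha> a1 b1 where A: "qg_joins q \<alpha> a1 b1 x y" using join by blast
  obtain \<rho> a2 b2 where R: "qg_joins q \<rho> a2 b2 y z" using join by blast
  obtain \<mu> a3 b3 where M: "qg_joins q \<mu> a3 b3 z x" using join by blast
  have T: "thin_triangle d (\<alpha> ` {a1..b1}) (\<rho> ` {a2..b2}) (\<mu> ` {a3..b3})"
    by (rule thin[OF A R M])
  obtain t where t: "t\<in>{a3..b3}" "2 * dist w (\<mu> t) \<le> dist w z + dist w x - dist z x + 4*d + 8*q + 6*e"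
    using up[OF M e, of w] by blast
  have "\<mu> t \<in> \<mu> ` {a3..b3}" using t by blast
  then have I: "infdist (\<mu> t) (\<alpha> ` {a1..b1} \<union> \<rho> ` {a2..b2}) \<le> d"
    using T unfolding thin_triangle_def nbhd_def by blast
  have NE: "\<alpha> ` {a1..b1} \<union> \<rho> ` {a2..b2} \<noteq> {}" using qg_joins_ne[OF A] by blast
  obtain r where r: "r \<in> \<alpha> ` {a1..b1} \<union> \<rho> ` {a2..b2}" "dist (\<mu> t) r \<le> d + e"
    using infdist_pick[OF I NE e] by blast
  have wr: "dist w r \<le> dist w (\<mu> t) + dist (\<mu> t) r" by (rule dist_triangle)
  show ?thesis
  proof (cases "r \<in> \<alpha> ` {a1..b1}")
    case True
    then obtain t' where "t' \<in> {a1..b1}" "r = \<alpha> t'" by blast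
    then have "dist w x + dist w y - dist x y \<le> 2 * dist w r + 3*q" using gp_low[OF A] by blast
    then have "dist x z + dist y w \<le> dist x y + dist z w + 6*d + 11*q + 8*e"
      using t(2) r(2) wr dist_commute[of z x] dist_commute[of w y] dist_commute[of w z] by linarith
    then show ?thesis by linarith
  next
    case False
    then have "r \<in> \<rho> ` {a2..b2}" using r(1) by blast
    then obtain t' where "t' \<in> {a2..b2}" "r = \<rho> t'" by blast
    then have "dist w y + dist w z - dist y z \<le> 2 * dist w r + 3*q" using gp_low[OF R] by blast
    then have "dist x z + dist y w \<le> dist x w + dist y z + 6*d + 11*q + 8*e"
      using t(2) r(2) wr dist_commute[of z x] dist_commute[of w y] dist_commute[of w x] by linarith
    then show ?thesis by linarith
  qed
qed

lemma four:
  fixes x y z w :: 'a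
  shows "dist x z + dist y w \<le> max (dist x w + dist y z) (dist x y + dist z w) + 6*d + 11*q"
proof (rule field_le_epsilon)
  fix e :: real assume "0 < e"
  then have "0 < e/8" by simp
  from four_eps[OF this, of x z y w] show "dist x z + dist y w \<le> max (dist x w + dist y z) (dist x y + dist z w) + 6*d + 11*q + e"
    by simp
qed

lemma loop:
  fixes u :: 'a and lam :: "real \<Rightarrow> 'a"
  assumes qp: "q > 0" and l0: "lam 0 = u" and lq: "lam q = u"
    and D: "\<And>r1 r2. r1\<in>{0..q} \<Longrightarrow> r2\<in>{0..q} \<Longrightarrow> dist (lam r1) (lam r2) \<le> \<bar>r1-r2\<bar> + q"
    and r: "r\<in>{0..q}"
  shows "dist u (lam r) \<le> d"
proof -
  have J: "qg_joins q lam 0 q u u"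
    unfolding qg_joins_def quasi_geodesic_def
  proof (intro conjI ballI)
    fix s t assume st: "s\<in>{0..q}" "t\<in>{0..q}"
    show "dist (lam s) (lam t) \<le> \<bar>s - t\<bar> + q" by (rule D[OF st])
    have "\<bar>s - t\<bar> - q \<le> 0" using st by (auto simp: abs_if)
    then show "\<bar>s - t\<bar> - q \<le> dist (lam s) (lam t)" using zero_le_dist[of "lam s" "lam t"] by linarith
  qed (use qp l0 lq in auto)
  have C: "qg_joins q (%_. u) 0 0 u u"
    unfolding qg_joins_def quasi_geodesic_def using qp by auto
  have "thin_triangle d (lam ` {0..q}) ((%_. u) ` {0..(0::real)}) ((%_. u) ` {0..(0::real)})"
    using thin[OF J C C] by blast
  moreover have "lam r \<in> lam ` {0..q}" using r by blast
  ultimately have "infdist (lam r) {u} \<le> d" unfolding thin_triangle_def nbhd_def by auto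
  then show ?thesis by (simp add: dist_commute)
qed

lemma seg:
  fixes \<gamma> :: "real \<Rightarrow> 'a"
  assumes qp: "q > 0" and Q: "quasi_geodesic q \<gamma> a b"
    and s: "s\<in>{a..b}" "t\<in>{a..b}" "\<bar>s-t\<bar> \<le> q/2"
  shows "dist (\<gamma> s) (\<gamma> t) \<le> d"
proof -
  define c where "c = 2*(t-s)/q"
  define lam where "lam = (\<lambda>r. \<gamma> (s + c * min r (q - r)))"
  have sa: "s - t \<le> q/2" "-(s-t) \<le> q/2" using abs_le_D1[OF s(3)] abs_le_D2[OF s(3)] by auto
  have st1: "-q \<le> 2*(t-s)" using sa by (simp add: algebra_simps)
  have st2: "2*(t-s) \<le> q" using sa by (simp add: algebra_simps)
  note st = st1 st2
  have c1: "\<bar>c\<bar> \<le> 1" unfolding c_def using qp st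
    by (auto simp: abs_le_iff divide_le_eq le_divide_eq)
  have cq: "c * (q/2) = t - s" using qp by (simp add: c_def)
  have par: "s + c * min r (q-r) \<in> {a..b}" if "r\<in>{0..q}" for r
  proof -
    have m: "0 \<le> min r (q-r)" "min r (q-r) \<le> q/2" using that by (auto simp: min_def)
    show ?thesis
    proof (cases "t \<ge> s")
      case True
      then have "c \<ge> 0" using qp by (simp add: c_def)
      then have "0 \<le> c * min r (q-r)" "c * min r (q-r) \<le> c * (q/2)"
        using m mult_nonneg_nonneg mult_left_mono[OF m(2)] by blast+
      then show ?thesis using cq s by auto
    next
      case False
      then have "c \<le> 0" using qp by (simp add: c_def divide_le_0_iff)
      then have "c * min r (q-r) \<le> 0" "c * (q/2) \<le> c * min r (q-r)"
        using m mult_nonpos_nonneg mult_left_mono_neg[OF m(2)] by blast+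
      then show ?thesis using cq s by auto
    qed
  qed
  have D: "dist (lam r1) (lam r2) \<le> \<bar>r1-r2\<bar> + q" if "r1\<in>{0..q}" "r2\<in>{0..q}" for r1 r2
  proof -
    have "dist (lam r1) (lam r2) \<le> \<bar>(s + c * min r1 (q-r1)) - (s + c * min r2 (q-r2))\<bar> + q"
      unfolding lam_def by (rule qg_up[OF Q par[OF that(1)] par[OF that(2)]])
    also have "\<bar>(s + c * min r1 (q-r1)) - (s + c * min r2 (q-r2))\<bar> = \<bar>c\<bar> * \<bar>min r1 (q-r1) - min r2 (q-r2)\<bar>"
      by (simp add: abs_mult[symmetric] algebra_simps)
    also have "\<dots> \<le> 1 * \<bar>min r1 (q-r1) - min r2 (q-r2)\<bar>"
      by (rule mult_right_mono[OF c1]) simp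
    also have "\<dots> \<le> \<bar>r1 - r2\<bar>" by (simp add: min_def abs_if)
    finally show ?thesis by simp
  qed
  have l0: "lam 0 = \<gamma> s" and lq: "lam q = \<gamma> s" using qp by (auto simp: lam_def)
  have "dist (\<gamma> s) (lam (q/2)) \<le> d"
    by (rule loop[OF qp l0 lq D]) (use qp in auto)
  moreover have "lam (q/2) = \<gamma> t"
  proof -
    have "min (q/2) (q - q/2) = q/2" by simp
    then have "lam (q/2) = \<gamma> (s + c * (q/2))" by (simp add: lam_def)
    also have "s + c * (q/2) = t" using cq by linarith
    finally show ?thesis .
  qed
  ultimately show ?thesis by simp
qed

lemma small:
  assumes qd: "q > 2*d"
  shows "dist (x::'a) y \<le> d"
proof -
  have qp: "q > 0" using qd d0 by linarith
  have claim1: "dist u v \<le> d" if uv: "dist u v \<le> q" for u v :: 'a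
  proof -
    define lam where "lam = (\<lambda>r::real. if r = q/2 then v else u)"
    have D: "dist (lam r1) (lam r2) \<le> \<bar>r1-r2\<bar> + q" for r1 r2
      using uv qp dist_commute[of u v] unfolding lam_def by (auto simp: abs_if)
    have "dist u (lam (q/2)) \<le> d"
      by (rule loop[OF qp _ _ D]) (use qp in \<open>auto simp: lam_def\<close>)
    then show ?thesis by (simp add: lam_def)
  qed
  obtain \<gamma> a b where J: "qg_joins q \<gamma> a b x y" using join by blast
  have Q: "quasi_geodesic q \<gamma> a b" and ab: "a \<le> b" and ex: "\<gamma> a = x" "\<gamma> b = y"
    using J unfolding qg_joins_def quasi_geodesic_def by auto
  have ind: "\<forall>t\<in>{a..b}. t \<le> a + real n * (q/2) \<longrightarrow> dist x (\<gamma> t) \<le> d" for n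
  proof (induction n)
    case 0
    then show ?case using ex d0 by auto
  next
    case (Suc n)
    show ?case
    proof (intro ballI impI)
      fix t assume t: "t\<in>{a..b}" "t \<le> a + real (Suc n) * (q/2)"
      define t' where "t' = max a (t - q/2)"
      define K where "K = real n * (q/2)"
      have e: "a + real (Suc n) * (q/2) = a + K + q/2" by (simp add: algebra_simps K_def)
      have K0: "0 \<le> K" using qp by (simp add: K_def)
      have tt: "t \<le> a + K + q/2" using t(2) e by linarith
      have t'in: "t'\<in>{a..b}" "t' \<le> a + K" "\<bar>t' - t\<bar> \<le> q/2"
        using t(1) qp tt K0 unfolding t'_def by (auto simp: max_def)
      have "dist x (\<gamma> t') \<le> d" using Suc.IH t'in unfolding K_def by blast
      moreover have "dist (\<gamma> t') (\<gamma> t) \<le> d" by (rule seg[OF qp Q t'in(1) t(1) t'in(3)])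
      moreover have "dist x (\<gamma> t) \<le> dist x (\<gamma> t') + dist (\<gamma> t') (\<gamma> t)" by (rule dist_triangle)
      ultimately have "dist x (\<gamma> t) \<le> q" using qd by linarith
      then show "dist x (\<gamma> t) \<le> d" by (rule claim1)
    qed
  qed
  obtain n :: nat where n: "(b-a)/(q/2) < real n" using reals_Archimedean2 by blast
  then have "b - a < real n * (q/2)" using qp by (simp add: pos_divide_less_eq)
  then have "b \<le> a + real n * (q/2)" by linarith
  then show ?thesis using ind[of n] ab ex by auto
qed

end

theorem mainTheorem7:
  fixes q \<delta>' :: real
  assumes "q \<ge> 0" and "\<delta>' \<ge> 0"
    and "quasi_geodesic_space q TYPE('a::metric_space)"
    and "\<And>(x::'a) y z \<gamma>1 a1 b1 \<gamma>2 a2 b2 \<gamma>3 a3 b3.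
           qg_joins q \<gamma>1 a1 b1 x y \<Longrightarrow> qg_joins q \<gamma>2 a2 b2 y z \<Longrightarrow> qg_joins q \<gamma>3 a3 b3 z x \<Longrightarrow>
           thin_triangle \<delta>' (\<gamma>1 ` {a1..b1}) (\<gamma>2 ` {a2..b2}) (\<gamma>3 ` {a3..b3})"
  shows "\<forall>x y z w :: 'a. dist x z + dist y w \<le>
           max (dist x w + dist y z) (dist x y + dist z w) + 56 * \<delta>' + 6 * q"
proof (intro allI)
  interpret T: thin_qg q \<delta>' "TYPE('a)" using assms by unfold_locales
  fix x y z w :: 'a
  show "dist x z + dist y w \<le> max (dist x w + dist y z) (dist x y + dist z w) + 56 * \<delta>' + 6 * q"
  proof (cases "q \<le> 2*\<delta>'")
    case True
    then show ?thesis using T.four[of x z y w] assms(1,2) by linarith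
  next
    case False
    then have "q > 2*\<delta>'" by simp
    then have "dist x z \<le> \<delta>'" "dist y w \<le> \<delta>'" using T.small by blast+
    moreover have "0 \<le> dist x w + dist y z" by simp
    ultimately show ?thesis using assms(1,2) max.cobounded1[of "dist x w + dist y z" "dist x y + dist z w"] by linarith
  qed
qed

end
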